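(* Let $G$ be a graph with maximum degree $2$ and $k$ a positive integer. If $G$ has exactly one path component with at least $k-1$ vertices and $0\le s(G,P_k)\le k$, then $G$ has no cycle with more than $k$ vertices, and its unique path component with at least $k-1$ vertices has $s(G,P_k)+k-1$ vertices.
   Context: $P_k$ is the path with $k$ vertices; $s(G,H)$ is the number of vertex subsets $X\subseteq V(G)$ such that $G[X]$ is isomorphic to $H$. *)

theory Defs
  imports Main
begin

definition simple_graph :: "'a set \<Rightarrow> ('a \<Rightarrow> 'a \<Rightarrow> bool) \<Rightarrow> bool" where
  "simple_graph V E \<longleftrightarrow> finite V \<and> (\<forall>u v. E u v \<longrightarrow> u \<in> V \<and> v \<in> V)
     \<and> (\<forall>u v. E u v \<longrightarrow> E v u) \<and> (\<forall>v. \<not> E v v)"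

definition degree :: "'a set \<Rightarrow> ('a \<Rightarrow> 'a \<Rightarrow> bool) \<Rightarrow> 'a \<Rightarrow> nat" where
  "degree V E v = card {u \<in> V. E v u}"

definition max_degree :: "'a set \<Rightarrow> ('a \<Rightarrow> 'a \<Rightarrow> bool) \<Rightarrow> nat" where
  "max_degree V E = Max (degree V E ` V)"

definition induces_path :: "('a \<Rightarrow> 'a \<Rightarrow> bool) \<Rightarrow> 'a set \<Rightarrow> nat \<Rightarrow> bool" where
  "induces_path E X m \<longleftrightarrow> (\<exists>f. bij_betw f {0..<m} X \<and>
     (\<forall>i<m. \<forall>j<m. E (f i) (f j) \<longleftrightarrow> (i + 1 = j \<or> j + 1 = i)))"

definition s_path :: "'a set \<Rightarrow> ('a \<Rightarrow> 'a \<Rightarrow> bool) \<Rightarrow> nat \<Rightarrow> nat" where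
  "s_path V E k = card {X. X \<subseteq> V \<and> induces_path E X k}"

definition component :: "'a set \<Rightarrow> ('a \<Rightarrow> 'a \<Rightarrow> bool) \<Rightarrow> 'a set \<Rightarrow> bool" where
  "component V E C \<longleftrightarrow> (\<exists>u\<in>V. C = {v \<in> V. E\<^sup>*\<^sup>* u v})"

definition path_component :: "'a set \<Rightarrow> ('a \<Rightarrow> 'a \<Rightarrow> bool) \<Rightarrow> 'a set \<Rightarrow> bool" where
  "path_component V E C \<longleftrightarrow> component V E C \<and> induces_path E C (card C)"

definition has_cycle_of_length :: "'a set \<Rightarrow> ('a \<Rightarrow> 'a \<Rightarrow> bool) \<Rightarrow> nat \<Rightarrow> bool" where
  "has_cycle_of_length V E m \<longleftrightarrow> 3 \<le> m \<and> (\<exists>c::nat \<Rightarrow> 'a.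
     inj_on c {0..<m} \<and> c ` {0..<m} \<subseteq> V \<and> (\<forall>i<m. E (c i) (c ((i + 1) mod m))))"

end

theory Submission
  imports Defs
begin
lemma mod_cancel_lt: fixes a b i m :: nat
  assumes "a < m" "b < m" "(i + a) mod m = (i + b) mod m" shows "a = b"
proof -
  have aux: "x = y" if "x \<le> y" "y < m" "(i + x) mod m = (i + y) mod m" for x y
  proof -
    have "m dvd (i + y) - (i + x)" using that mod_eq_dvd_iff_nat[of "i+x" "i+y" m] by simp
    then have "m dvd y - x" by simp
    then show ?thesis using that by (metis diff_is_0_eq dvd_imp_le le_antisym less_imp_diff_less neq0_conv not_le)
  qed
  show ?thesis using aux[of a b] aux[of b a] assms by (cases "a \<le> b") auto
qed

lemma cyc_prev: fixes p m :: nat assumes "p < m"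
  shows "((p + m - 1) mod m + 1) mod m = p"
proof -
  have "((p + m - 1) mod m + 1) mod m = (p + m - 1 + 1) mod m" by (rule mod_add_left_eq)
  also have "p + m - 1 + 1 = p + m" using assms by simp
  finally show ?thesis using assms by simp
qed

lemma cyc_distinct: fixes p m :: nat assumes "p < m" "3 \<le> m"
  shows "(p + 1) mod m \<noteq> (p + m - 1) mod m"
proof
  assume h: "(p + 1) mod m = (p + m - 1) mod m"
  have "(p + m - 1) = p + (m - 1)" using assms by simp
  then have "(p + 1) mod m = (p + (m - 1)) mod m" using h by simp
  then have "1 = m - 1" using mod_cancel_lt[of 1 m "m - 1" p] assms by simp
  then show False using assms by simp
qed

lemma rtranclp_sym: assumes "\<And>x y. E x y \<Longrightarrow> E y x" "E\<^sup>*\<^sup>* a b" shows "E\<^sup>*\<^sup>* b a"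
  using assms(2)
proof induction
  case base then show ?case by simp
next
  case (step y z) then show ?case using assms(1) by (meson converse_rtranclp_into_rtranclp)
qed

lemma rtranclp_closed: assumes "\<And>x w. x \<in> S \<Longrightarrow> E x w \<Longrightarrow> w \<in> S" "E\<^sup>*\<^sup>* a b" "a \<in> S"
  shows "b \<in> S"
  using assms(2,3) by induction (auto intro: assms(1))

lemma rtranclp_closed2: assumes "E\<^sup>*\<^sup>* a b" "a \<in> S" "\<And>x w. x \<in> S \<Longrightarrow> E x w \<Longrightarrow> w \<in> S"
  shows "b \<in> S"
  using rtranclp_closed[of S E a b] assms by blast

locale g2 =
  fixes V :: "'a set" and E :: "'a \<Rightarrow> 'a \<Rightarrow> bool"
  assumes sg: "simple_graph V E"
    and deg: "\<And>v. v \<in> V \<Longrightarrow> card {u \<in> V. E v u} \<le> 2"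
begin

lemma finV: "finite V" using sg by (simp add: simple_graph_def)
lemma EV1: "E u v \<Longrightarrow> u \<in> V" using sg by (simp add: simple_graph_def)
lemma EV2: "E u v \<Longrightarrow> v \<in> V" using sg by (simp add: simple_graph_def)
lemma Esym: "E u v \<Longrightarrow> E v u" using sg by (simp add: simple_graph_def)
lemma Eirr: "\<not> E v v" using sg by (simp add: simple_graph_def)

lemma nbr2: assumes "a \<noteq> b" "E v a" "E v b" "E v w" shows "w = a \<or> w = b"
proof (rule ccontr)
  assume "\<not> (w = a \<or> w = b)"
  then have "card {a, b, w} = 3" using assms by auto
  moreover have "{a, b, w} \<subseteq> {u \<in> V. E v u}" using assms EV2 by auto
  moreover have "finite {u \<in> V. E v u}" using finV by simp
  ultimately have "3 \<le> card {u \<in> V. E v u}" by (metis card_mono)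
  moreover have "v \<in> V" using assms EV1 by blast
  ultimately show False using deg by fastforce
qed

definition is_cyc :: "nat \<Rightarrow> (nat \<Rightarrow> 'a) \<Rightarrow> bool" where
  "is_cyc m c \<longleftrightarrow> 3 \<le> m \<and> inj_on c {0..<m} \<and> c ` {0..<m} \<subseteq> V \<and> (\<forall>i<m. E (c i) (c ((i + 1) mod m)))"

lemma has_cycle_iff: "has_cycle_of_length V E m \<longleftrightarrow> (\<exists>c. is_cyc m c)"
  by (auto simp: has_cycle_of_length_def is_cyc_def)

lemma cyc_nbr: assumes "is_cyc m c" "p < m" "E (c p) w"
  shows "w = c ((p + 1) mod m) \<or> w = c ((p + m - 1) mod m)"
proof -
  have m3: "3 \<le> m" and inj: "inj_on c {0..<m}" and ed: "\<forall>i<m. E (c i) (c ((i + 1) mod m))"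
    using assms(1) by (auto simp: is_cyc_def)
  have e1: "E (c p) (c ((p + 1) mod m))" using ed assms(2) by auto
  have "E (c ((p + m - 1) mod m)) (c (((p + m - 1) mod m + 1) mod m))" using ed m3 by auto
  then have e2: "E (c p) (c ((p + m - 1) mod m))" using cyc_prev[OF assms(2)] Esym by simp
  have "c ((p + 1) mod m) \<noteq> c ((p + m - 1) mod m)"
    using cyc_distinct[OF assms(2) m3] inj m3 by (simp add: inj_on_eq_iff)
  then show ?thesis using nbr2 e1 e2 assms(3) by blast
qed


lemma arc_induces: assumes "is_cyc m c" "k < m"
  shows "induces_path E ((\<lambda>j. c ((i + j) mod m)) ` {0..<k}) k"
proof -
  have m3: "3 \<le> m" and inj: "inj_on c {0..<m}" and ed: "\<forall>i<m. E (c i) (c ((i + 1) mod m))"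
    using assms(1) by (auto simp: is_cyc_def)
  let ?f = "\<lambda>j. c ((i + j) mod m)"
  have injf: "inj_on ?f {0..<k}"
  proof (rule inj_onI)
    fix a b assume "a \<in> {0..<k}" "b \<in> {0..<k}" "?f a = ?f b"
    then have "(i + a) mod m = (i + b) mod m" using inj m3 by (simp add: inj_on_eq_iff)
    moreover have "a < m" "b < m" using \<open>a \<in> {0..<k}\<close> \<open>b \<in> {0..<k}\<close> assms(2) by auto
    ultimately show "a = b" using mod_cancel_lt by blast
  qed
  have edge: "E (?f a) (?f b) \<longleftrightarrow> (a + 1 = b \<or> b + 1 = a)" if ab: "a < k" "b < k" for a b
  proof
    assume e: "E (?f a) (?f b)"
    have pm: "(i + a) mod m < m" using m3 by simp
    from cyc_nbr[OF assms(1) pm e]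
    have "c ((i + b) mod m) = c (((i + a) mod m + 1) mod m) \<or>
          c ((i + b) mod m) = c (((i + a) mod m + m - 1) mod m)" .
    then have "(i + b) mod m = ((i + a) mod m + 1) mod m \<or>
          (i + b) mod m = ((i + a) mod m + m - 1) mod m" using inj m3 by (simp add: inj_on_eq_iff)
    then show "a + 1 = b \<or> b + 1 = a"
    proof
      assume h: "(i + b) mod m = ((i + a) mod m + 1) mod m"
      have "((i + a) mod m + 1) mod m = (i + (a + 1)) mod m" by (simp only: mod_add_left_eq add.assoc)
      then have "(i + (a + 1)) mod m = (i + b) mod m" using h by simp
      then show ?thesis using mod_cancel_lt[of "a+1" m b i] ab assms(2) by simp
    next
      assume h: "(i + b) mod m = ((i + a) mod m + m - 1) mod m"
      have "((i + b) mod m + 1) mod m = (((i + a) mod m + m - 1) mod m + 1) mod m" using h by simp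
      also have "\<dots> = (i + a) mod m" using cyc_prev[OF pm] by simp
      moreover have "((i + b) mod m + 1) mod m = (i + (b + 1)) mod m" by (simp only: mod_add_left_eq add.assoc)
      ultimately have "(i + (b + 1)) mod m = (i + a) mod m" by simp
      then show ?thesis using mod_cancel_lt[of "b+1" m a i] ab assms(2) by simp
    qed
  next
    assume "a + 1 = b \<or> b + 1 = a"
    moreover have "E (?f a) (?f (a + 1))" for a
    proof -
      have "E (c ((i + a) mod m)) (c (((i + a) mod m + 1) mod m))" using ed m3 by simp
      moreover have "((i + a) mod m + 1) mod m = (i + (a + 1)) mod m"
        by (simp only: mod_add_left_eq add.assoc)
      ultimately show ?thesis by metis
    qed
    ultimately show "E (?f a) (?f b)" using Esym by blast
  qed
  show ?thesis unfolding induces_path_def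
    using injf edge by (intro exI[of _ ?f]) (auto simp: bij_betw_def)
qed

lemma arc_inj: assumes "is_cyc m c" "k < m" "1 \<le> k"
  shows "inj_on (\<lambda>i. (\<lambda>j. c ((i + j) mod m)) ` {0..<k}) {0..<m}"
proof (rule inj_onI)
  have m3: "3 \<le> m" and inj: "inj_on c {0..<m}"
    using assms(1) by (auto simp: is_cyc_def)
  let ?A = "\<lambda>i. (\<lambda>j. c ((i + j) mod m)) ` {0..<k}"
  have key: "i = i'" if "i < m" "i' < m" "?A i = ?A i'" for i i'
  proof -
    have "c ((i + 0) mod m) \<in> ?A i" using assms(3) by (intro imageI) auto
    then have "c i \<in> ?A i" using that by simp
    then have "c i \<in> ?A i'" using that by simp
    then obtain j where j: "j < k" "c i = c ((i' + j) mod m)" by auto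
    then have ij: "i = (i' + j) mod m" using inj that m3 by (simp add: inj_on_eq_iff)
    show ?thesis
    proof (cases "j = 0")
      case True then show ?thesis using ij that by simp
    next
      case False
      have "(i + m - 1) mod m = ((i' + j) mod m + (m - 1)) mod m" using ij m3
        by (metis Nat.add_diff_assoc add_leD2 numeral_le_one_iff semiring_norm(70) le_trans one_le_numeral)
      also have "\<dots> = (i' + j + (m - 1)) mod m" by (rule mod_add_left_eq)
      also have "(i' + j + (m - 1)) mod m = (i' + (j - 1) + m) mod m" using False m3
      proof -
        have eq: "i' + j + (m - 1) = i' + (j - 1) + m" using False m3 by simp
        show ?thesis by (simp only: eq)
      qed
      also have "\<dots> = (i' + (j - 1)) mod m" by simp
      finally have "c ((i + m - 1) mod m) \<in> ?A i'" using j False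
        by (auto intro!: image_eqI[of _ _ "j - 1"])
      then have "c ((i + m - 1) mod m) \<in> ?A i" using that by simp
      then obtain j' where j': "j' < k" "c ((i + m - 1) mod m) = c ((i + j') mod m)" by auto
      then have "(i + (m - 1)) mod m = (i + j') mod m" using inj m3
        by (simp add: inj_on_eq_iff)
      then have "m - 1 = j'" using mod_cancel_lt[of "m - 1" m j' i] j' assms(2) by simp
      then show ?thesis using j' assms(2) by simp
    qed
  qed
  fix i i' assume "i \<in> {0..<m}" "i' \<in> {0..<m}" "?A i = ?A i'"
  then show "i = i'" using key by auto
qed

lemma arc_sub: assumes "is_cyc m c" shows "(\<lambda>j. c ((i + j) mod m)) ` {0..<k} \<subseteq> V"
proof -
  have "3 \<le> m" "c ` {0..<m} \<subseteq> V" using assms by (auto simp: is_cyc_def)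
  then show ?thesis by auto
qed

lemma finite_s: "finite {X. X \<subseteq> V \<and> P X}"
proof -
  have "{X. X \<subseteq> V \<and> P X} \<subseteq> Pow V" by auto
  then show ?thesis using finV by (meson finite_Pow_iff finite_subset)
qed

lemma cycle_bound: assumes "is_cyc m c" "1 \<le> k" "s_path V E k \<le> k" shows "m \<le> k"
proof (rule ccontr)
  assume "\<not> m \<le> k"
  then have km: "k < m" by simp
  let ?A = "\<lambda>i. (\<lambda>j. c ((i + j) mod m)) ` {0..<k}"
  have "?A ` {0..<m} \<subseteq> {X. X \<subseteq> V \<and> induces_path E X k}"
    using arc_induces[OF assms(1) km] arc_sub[OF assms(1)] by blast
  then have "card (?A ` {0..<m}) \<le> s_path V E k" unfolding s_path_def
    by (rule card_mono[OF finite_s])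
  moreover have "card (?A ` {0..<m}) = m"
    using arc_inj[OF assms(1) km assms(2)] by (simp add: card_image)
  ultimately show False using km assms(3) by simp
qed


definition vp :: "'a set \<Rightarrow> 'a list \<Rightarrow> bool" where
  "vp D xs \<longleftrightarrow> distinct xs \<and> set xs \<subseteq> D \<and> (\<forall>i. Suc i < length xs \<longrightarrow> E (xs ! i) (xs ! Suc i))"

lemma vp_rev: assumes "vp D xs" shows "vp D (rev xs)"
proof -
  have "E (rev xs ! i) (rev xs ! Suc i)" if "Suc i < length xs" for i
  proof -
    define k where "k = length xs - Suc (Suc i)"
    have sk: "Suc k = length xs - Suc i" "Suc k < length xs" using that by (auto simp: k_def)
    have e: "E (xs ! k) (xs ! Suc k)" using assms sk(2) unfolding vp_def by blast
    have r1: "rev xs ! i = xs ! (length xs - Suc i)" using that by (intro rev_nth) simp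
    have r2: "rev xs ! Suc i = xs ! (length xs - Suc (Suc i))" using that by (intro rev_nth)
    show ?thesis unfolding r1 r2 sk(1)[symmetric] k_def[symmetric] using Esym[OF e] .
  qed
  then show ?thesis using assms by (simp add: vp_def)
qed

end

locale g2c = g2 +
  fixes u D
  assumes uV: "u \<in> V" and Ddef: "D = {v \<in> V. E\<^sup>*\<^sup>* u v}"
begin

lemma closedD: assumes "x \<in> D" "E x w" shows "w \<in> D"
  using assms Ddef EV2 by (auto intro: rtranclp.rtrancl_into_rtrancl)

lemma connD: assumes "x \<in> D" "y \<in> D" shows "E\<^sup>*\<^sup>* x y"
proof -
  have "E\<^sup>*\<^sup>* u x" "E\<^sup>*\<^sup>* u y" using assms Ddef by auto
  then show ?thesis using rtranclp_sym[of E u x] Esym by (meson rtranclp_trans)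
qed

lemma uD: "u \<in> D" using uV Ddef by simp

lemma finD: "finite D" using Ddef finV by simp

lemma DV: "D \<subseteq> V" using Ddef by auto

lemma compD: "component V E D" unfolding component_def using uV Ddef by blast

lemma cyc_is_D: assumes "is_cyc m c" "c ` {0..<m} \<subseteq> D" shows "c ` {0..<m} = D"
proof
  show "c ` {0..<m} \<subseteq> D" by fact
  have m3: "3 \<le> m" using assms(1) by (simp add: is_cyc_def)
  have cl: "w \<in> c ` {0..<m}" if xin: "x \<in> c ` {0..<m}" and exw: "E x w" for x w
  proof -
    obtain p where p: "p < m" "x = c p" using xin by auto
    have d: "w = c ((p+1) mod m) \<or> w = c ((p+m-1) mod m)" using cyc_nbr[OF assms(1) p(1)] exw p by simp
    moreover have "(p+1) mod m \<in> {0..<m}" "(p+m-1) mod m \<in> {0..<m}" using m3 by auto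
    ultimately show ?thesis by blast
  qed
  show "D \<subseteq> c ` {0..<m}"
  proof
    fix v assume "v \<in> D"
    have c0: "c 0 \<in> c ` {0..<m}" using m3 by auto
    then have "E\<^sup>*\<^sup>* (c 0) v" using connD assms(2) \<open>v \<in> D\<close> by blast
    then show "v \<in> c ` {0..<m}" using c0 cl by (rule rtranclp_closed2)
  qed
qed

lemma head_nbr: assumes "vp D ys" "\<forall>zs. vp D zs \<longrightarrow> length zs \<le> length ys" "ys \<noteq> []"
  "E (ys ! 0) w"
  shows "(1 < length ys \<and> w = ys ! 1) \<or> (\<exists>j. 2 \<le> j \<and> j < length ys \<and> w = ys ! j)"
proof -
  have "ys ! 0 \<in> D" using assms(1,3) unfolding vp_def by (meson nth_mem length_greater_0_conv subsetD)
  then have wD: "w \<in> D" using closedD assms(4) by blast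
  have "w \<in> set ys"
  proof (rule ccontr)
    assume nw: "w \<notin> set ys"
    have "vp D (w # ys)" unfolding vp_def
    proof (intro conjI allI impI)
      show "distinct (w # ys)" using nw assms(1) by (simp add: vp_def)
      show "set (w # ys) \<subseteq> D" using wD assms(1) by (simp add: vp_def)
      fix i assume i: "Suc i < length (w # ys)"
      show "E ((w # ys) ! i) ((w # ys) ! Suc i)"
      proof (cases i)
        case 0 then show ?thesis using assms(4) Esym by simp
      next
        case (Suc i') then show ?thesis using assms(1) i by (simp add: vp_def)
      qed
    qed
    then show False using assms(2) by fastforce
  qed
  then obtain j where j: "j < length ys" "w = ys ! j" by (metis in_set_conv_nth)
  have "j \<noteq> 0"
  proof
    assume "j = 0" then show False using j assms(4) Eirr by simp
  qed
  show ?thesis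
  proof (cases "j = 1")
    case True then show ?thesis using j by simp
  next
    case False then have "2 \<le> j" using \<open>j \<noteq> 0\<close> by simp
    then show ?thesis using j by blast
  qed
qed

lemma cyc_from: assumes "vp D ys" "2 \<le> j" "j < length ys" "E (ys ! 0) (ys ! j)"
  shows "\<exists>m c. is_cyc m c \<and> c ` {0..<m} = D"
proof -
  have ic: "is_cyc (j + 1) ((!) ys)" unfolding is_cyc_def
  proof (intro conjI allI impI)
    show "3 \<le> j + 1" using assms by simp
    show "inj_on ((!) ys) {0..<j + 1}" using assms(1,3)
      by (auto simp: vp_def inj_on_def nth_eq_iff_index_eq)
    show "(!) ys ` {0..<j + 1} \<subseteq> V"
    proof
      fix x assume "x \<in> (!) ys ` {0..<j + 1}"
      then obtain i where "i < j + 1" "x = ys ! i" by auto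
      then have "x \<in> set ys" using assms(3) by simp
      then show "x \<in> V" using assms(1) DV by (auto simp: vp_def)
    qed
    fix i assume i: "i < j + 1"
    show "E (ys ! i) (ys ! ((i + 1) mod (j + 1)))"
    proof (cases "i = j")
      case True then show ?thesis using assms(4) Esym by simp
    next
      case False then show ?thesis using i assms(1,3) by (simp add: vp_def)
    qed
  qed
  moreover have "(!) ys ` {0..<j + 1} \<subseteq> D" using assms(1,3) by (auto simp: vp_def)
  ultimately show ?thesis using cyc_is_D by blast
qed

lemma classify: "path_component V E D \<or> (\<exists>m c. is_cyc m c \<and> c ` {0..<m} = D)"
proof (rule disjCI)
  assume nc: "\<not> (\<exists>m c. is_cyc m c \<and> c ` {0..<m} = D)"
  have "vp D [u]" using uD by (simp add: vp_def)
  moreover have "\<forall>zs. vp D zs \<longrightarrow> length zs < card D + 1"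
  proof (intro allI impI)
    fix zs assume "vp D zs"
    then have "length zs = card (set zs)" "set zs \<subseteq> D" by (auto simp: vp_def distinct_card)
    then show "length zs < card D + 1" using finD by (simp add: card_mono le_imp_less_Suc)
  qed
  ultimately obtain xs where xs: "vp D xs" and mx: "\<forall>zs. vp D zs \<longrightarrow> length zs \<le> length xs"
    using ex_has_greatest_nat[of "vp D" "[u]" length "card D + 1"] by blast
  define n where "n = length xs"
  have ne: "xs \<noteq> []" using mx \<open>vp D [u]\<close> by fastforce
  have xrv: "vp D (rev xs)" using vp_rev[OF xs] .
  have mxr: "\<forall>zs. vp D zs \<longrightarrow> length zs \<le> length (rev xs)" using mx by simp
  have hd1: "1 < length ys \<and> w = ys ! 1"
    if "vp D ys" "\<forall>zs. vp D zs \<longrightarrow> length zs \<le> length ys" "ys \<noteq> []" "E (ys ! 0) w" for ys w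
    using head_nbr[OF that] cyc_from[OF that(1)] that(4) nc by blast
  have dist: "distinct xs" and sub: "set xs \<subseteq> D" and ed: "\<And>i. Suc i < n \<Longrightarrow> E (xs ! i) (xs ! Suc i)"
    using xs by (auto simp: vp_def n_def)
  have nbrs: "\<exists>j<n. w = xs ! j \<and> (i + 1 = j \<or> j + 1 = i)" if i: "i < n" "E (xs ! i) w" for i w
  proof (cases "i = 0")
    case True then show ?thesis using hd1[OF xs mx ne] i by (auto simp: n_def)
  next
    case False
    show ?thesis
    proof (cases "i = n - 1")
      case True
      have "rev xs ! 0 = xs ! i" using True ne by (simp add: rev_nth n_def)
      then have "1 < length (rev xs) \<and> w = rev xs ! 1" using hd1[OF xrv mxr] ne i by simp
      moreover have "rev xs ! 1 = xs ! (n - 2)" if "1 < n" using that by (simp add: rev_nth n_def numeral_2_eq_2)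
      ultimately show ?thesis using True False i by (auto simp: n_def intro!: exI[of _ "n - 2"])
    next
      case False2: False
      have e1: "E (xs ! i) (xs ! (i + 1))" using ed i False2 by simp
      have "E (xs ! (i - 1)) (xs ! Suc (i - 1))" using ed[of "i - 1"] i False by simp
      then have e2: "E (xs ! i) (xs ! (i - 1))" using False Esym by simp
      have "xs ! (i + 1) \<noteq> xs ! (i - 1)" using dist i False2 False
        by (simp add: nth_eq_iff_index_eq n_def)
      then have "w = xs ! (i + 1) \<or> w = xs ! (i - 1)" using nbr2 e1 e2 i(2) by blast
      moreover have "i + 1 < n" "i - 1 < n" "(i - 1) + 1 = i" using i False False2 by auto
      ultimately show ?thesis by blast
    qed
  qed
  have setD: "set xs = D"
  proof
    show "set xs \<subseteq> D" by (rule sub)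
    have cl: "w \<in> set xs" if "x \<in> set xs" "E x w" for x w
      using nbrs that by (metis in_set_conv_nth n_def)
    show "D \<subseteq> set xs"
    proof
      fix v assume "v \<in> D"
      have x0: "xs ! 0 \<in> set xs" using ne by simp
      then have "E\<^sup>*\<^sup>* (xs ! 0) v" using connD sub \<open>v \<in> D\<close> by blast
      then show "v \<in> set xs" using x0 cl by (rule rtranclp_closed2)
    qed
  qed
  have cardD: "card D = n" using setD distinct_card[OF dist] by (simp add: n_def)
  have "induces_path E D (card D)" unfolding induces_path_def cardD
  proof (intro exI conjI allI impI)
    show "bij_betw ((!) xs) {0..<n} D" using bij_betw_nth[OF dist _ setD[symmetric]]
      by (simp add: n_def atLeast0LessThan)
    fix i j assume ij: "i < n" "j < n"
    show "E (xs ! i) (xs ! j) \<longleftrightarrow> (i + 1 = j \<or> j + 1 = i)"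
    proof
      assume "E (xs ! i) (xs ! j)"
      then obtain j' where "j' < n" "xs ! j = xs ! j'" "i + 1 = j' \<or> j' + 1 = i" using nbrs ij by blast
      then show "i + 1 = j \<or> j + 1 = i" using dist ij by (simp add: nth_eq_iff_index_eq n_def)
    next
      assume "i + 1 = j \<or> j + 1 = i"
      then show "E (xs ! i) (xs ! j)" using ed ij Esym by auto
    qed
  qed
  then show "path_component V E D" using compD by (simp add: path_component_def)
qed

end


lemma step_mono: fixes h :: "nat \<Rightarrow> nat"
  assumes inj: "inj_on h {0..<k}"
    and st: "\<And>j. Suc j < k \<Longrightarrow> h (Suc j) = h j + 1 \<or> h j = h (Suc j) + 1"
  shows "(\<forall>j<k. h j = h 0 + j) \<or> (\<forall>j<k. h 0 = h j + j)"
proof -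
  have main: "(\<forall>j\<le>n. h j = h 0 + j) \<or> (\<forall>j\<le>n. h 0 = h j + j)" if "n < k" for n
    using that
  proof (induction n)
    case 0 then show ?case by simp
  next
    case (Suc n)
    have s: "h (Suc n) = h n + 1 \<or> h n = h (Suc n) + 1" using st Suc.prems by blast
    show ?case
    proof (cases "n = 0")
      case True
      then show ?thesis using s by (auto simp: le_Suc_eq)
    next
      case False
      have ne: "h (Suc n) \<noteq> h (n - 1)"
      proof
        assume "h (Suc n) = h (n - 1)"
        then have "Suc n = n - 1" using inj Suc.prems by (auto simp: inj_on_def)
        then show False by simp
      qed
      have IH: "(\<forall>j\<le>n. h j = h 0 + j) \<or> (\<forall>j\<le>n. h 0 = h j + j)" using Suc.IH[OF Suc_lessD[OF Suc.prems]] .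
      from IH show ?thesis
      proof
        assume up: "\<forall>j\<le>n. h j = h 0 + j"
        have a: "h n = h 0 + n" using up by blast
        have b: "h (n - 1) = h 0 + (n - 1)" using up by (meson diff_le_self)
        have "h (Suc n) = h n + 1" using s ne False a b by auto
        then have "h (Suc n) = h 0 + Suc n" using a by simp
        then show ?thesis using up by (metis le_Suc_eq)
      next
        assume dn: "\<forall>j\<le>n. h 0 = h j + j"
        have a: "h 0 = h n + n" using dn by blast
        have b: "h 0 = h (n - 1) + (n - 1)" using dn by (meson diff_le_self)
        have "h n = h (Suc n) + 1" using s ne False a b by auto
        then have "h 0 = h (Suc n) + Suc n" using a by simp
        then show ?thesis using dn by (metis le_Suc_eq)
      qed
    qed
  qed
  show ?thesis
  proof (cases k)
    case 0 then show ?thesis by simp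
  next
    case (Suc k') then show ?thesis using main[of k'] by (auto simp: less_Suc_eq_le)
  qed
qed

lemma window_of:
  fixes g :: "nat \<Rightarrow> 'a" and f :: "nat \<Rightarrow> 'a"
  assumes bg: "bij_betw g {0..<L} C"
    and Eg: "\<And>i j. i < L \<Longrightarrow> j < L \<Longrightarrow> E (g i) (g j) \<longleftrightarrow> (i + 1 = j \<or> j + 1 = i)"
    and bf: "bij_betw f {0..<k} X"
    and Ef: "\<And>i j. i < k \<Longrightarrow> j < k \<Longrightarrow> E (f i) (f j) \<longleftrightarrow> (i + 1 = j \<or> j + 1 = i)"
    and XC: "X \<subseteq> C" and k1: "1 \<le> k"
  shows "\<exists>i. i + k \<le> L \<and> X = g ` {i..<i+k}"
proof -
  define h where "h j = the_inv_into {0..<L} g (f j)" for j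
  have injg: "inj_on g {0..<L}" and gC: "g ` {0..<L} = C" using bg by (auto simp: bij_betw_def)
  have fX: "f j \<in> X" if "j < k" for j using bf that by (auto simp: bij_betw_def)
  have hL: "h j < L" and gh: "g (h j) = f j" if "j < k" for j
  proof -
    have fi: "f j \<in> g ` {0..<L}" using fX[OF that] XC gC by auto
    have "the_inv_into {0..<L} g (f j) \<in> {0..<L}" by (rule the_inv_into_into[OF injg fi]) simp
    then show "h j < L" unfolding h_def by simp
    show "g (h j) = f j" unfolding h_def by (rule f_the_inv_into_f[OF injg fi])
  qed
  have injh: "inj_on h {0..<k}"
  proof (rule inj_onI)
    fix a b assume ab: "a \<in> {0..<k}" "b \<in> {0..<k}" "h a = h b"
    then have "f a = f b" using gh by (metis atLeastLessThan_iff)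
    then show "a = b" using bf ab by (auto simp: bij_betw_def inj_on_def)
  qed
  have st: "h (Suc j) = h j + 1 \<or> h j = h (Suc j) + 1" if "Suc j < k" for j
  proof -
    have "E (f j) (f (Suc j))" using Ef[of j "Suc j"] that by simp
    then have "E (g (h j)) (g (h (Suc j)))" using gh that by simp
    then show ?thesis using Eg hL that by auto
  qed
  have Xf: "X = f ` {0..<k}" using bf by (simp add: bij_betw_def)
  have Xh: "X = g ` (h ` {0..<k})" unfolding Xf image_image by (rule image_cong) (auto simp: gh)
  from step_mono[OF injh st] show ?thesis
  proof
    assume up: "\<forall>j<k. h j = h 0 + j"
    have "h ` {0..<k} = {h 0..<h 0 + k}"
    proof
      show "h ` {0..<k} \<subseteq> {h 0..<h 0 + k}"
      proof
        fix x assume "x \<in> h ` {0..<k}"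
        then obtain j where j: "j < k" "x = h j" by auto
        have "h j = h 0 + j" using up j(1) by blast
        then show "x \<in> {h 0..<h 0 + k}" using j by simp
      qed
      show "{h 0..<h 0 + k} \<subseteq> h ` {0..<k}"
      proof
        fix x assume x: "x \<in> {h 0..<h 0 + k}"
        then have j: "x - h 0 < k" by auto
        have "h (x - h 0) = h 0 + (x - h 0)" using up j by blast
        then have "x = h (x - h 0)" using x by simp
        then show "x \<in> h ` {0..<k}" using j by (metis atLeastLessThan_iff image_eqI zero_le)
      qed
    qed
    moreover have "h 0 + k \<le> L"
    proof -
      have "k - 1 < k" using k1 by simp
      then have "h (k - 1) = h 0 + (k - 1)" using up by blast
      then show ?thesis using hL[of "k - 1"] k1 by simp
    qed
    ultimately show ?thesis using Xh by blast
  next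
    assume dn: "\<forall>j<k. h 0 = h j + j"
    define i where "i = h (k - 1)"
    have "k - 1 < k" using k1 by simp
    then have h0: "h 0 = i + (k - 1)" using dn unfolding i_def by blast
    have "h ` {0..<k} = {i..<i + k}"
    proof
      show "h ` {0..<k} \<subseteq> {i..<i + k}"
      proof
        fix x assume "x \<in> h ` {0..<k}"
        then obtain j where "j < k" "x = h j" by auto
        moreover have "h 0 = h j + j" using dn \<open>j < k\<close> by blast
        ultimately have "i \<le> h j" "h j < i + k" using h0 k1 by arith+
        then show "x \<in> {i..<i + k}" using \<open>x = h j\<close> by simp
      qed
      show "{i..<i + k} \<subseteq> h ` {0..<k}"
      proof
        fix x assume x: "x \<in> {i..<i + k}"
        then have "h 0 - x < k" using h0 by auto
        moreover have "x \<le> h 0" using x h0 k1 by auto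
        moreover have "h 0 = h (h 0 - x) + (h 0 - x)" using dn \<open>h 0 - x < k\<close> by blast
        ultimately have "h (h 0 - x) = x" "h 0 - x \<in> {0..<k}" by auto
        then show "x \<in> h ` {0..<k}" by (metis image_eqI)
      qed
    qed
    moreover have "i + k \<le> L" using hL[of 0] h0 k1 by simp
    ultimately show ?thesis using Xh by blast
  qed
qed

context g2
begin

lemma cyc_edges: assumes "is_cyc m c" "p < m"
  shows "E (c p) (c ((p + 1) mod m)) \<and> E (c p) (c ((p + m - 1) mod m)) \<and>
         c ((p + 1) mod m) \<noteq> c ((p + m - 1) mod m)"
proof -
  have m3: "3 \<le> m" and inj: "inj_on c {0..<m}" and ed: "\<forall>i<m. E (c i) (c ((i + 1) mod m))"
    using assms(1) by (auto simp: is_cyc_def)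
  have e1: "E (c p) (c ((p + 1) mod m))" using ed assms(2) by auto
  have "E (c ((p + m - 1) mod m)) (c (((p + m - 1) mod m + 1) mod m))" using ed m3 by auto
  then have e2: "E (c p) (c ((p + m - 1) mod m))" using cyc_prev[OF assms(2)] Esym by simp
  have "c ((p + 1) mod m) \<noteq> c ((p + m - 1) mod m)"
    using cyc_distinct[OF assms(2) m3] inj m3 by (simp add: inj_on_eq_iff)
  then show ?thesis using e1 e2 by blast
qed

lemma in_path_comp: assumes XV: "X \<subseteq> V" and ip: "induces_path E X k" and k1: "1 \<le> k"
  and sk: "s_path V E k \<le> k"
  shows "\<exists>D. path_component V E D \<and> X \<subseteq> D"
proof -
  obtain f where bf: "bij_betw f {0..<k} X"
    and Ef: "\<forall>i<k. \<forall>j<k. E (f i) (f j) \<longleftrightarrow> (i + 1 = j \<or> j + 1 = i)"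
    using ip unfolding induces_path_def by blast
  have fX: "f j \<in> X" if "j < k" for j using bf that by (auto simp: bij_betw_def)
  define x0 where "x0 = f 0"
  have x0V: "x0 \<in> V" using fX[of 0] k1 XV x0_def by auto
  define D where "D = {v \<in> V. E\<^sup>*\<^sup>* x0 v}"
  interpret gc: g2c V E x0 D by unfold_locales (auto simp: x0V D_def)
  have reach: "j < k \<Longrightarrow> E\<^sup>*\<^sup>* x0 (f j)" for j
  proof (induction j)
    case 0 then show ?case by (simp add: x0_def)
  next
    case (Suc j)
    have "E (f j) (f (Suc j))" using Ef Suc.prems by auto
    then show ?case using Suc by (meson Suc_lessD rtranclp.rtrancl_into_rtrancl)
  qed
  have XD: "X \<subseteq> D"
  proof
    fix x assume "x \<in> X"
    then obtain j where "j < k" "x = f j" using bf by (auto simp: bij_betw_def)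
    then show "x \<in> D" using reach XV fX D_def by auto
  qed
  from gc.classify show ?thesis
  proof
    assume "path_component V E D" then show ?thesis using XD by blast
  next
    assume "\<exists>m c. is_cyc m c \<and> c ` {0..<m} = D"
    then obtain m c where cy: "is_cyc m c" and cD: "c ` {0..<m} = D" by blast
    have m3: "3 \<le> m" and inj: "inj_on c {0..<m}" using cy by (auto simp: is_cyc_def)
    have mk: "m \<le> k" using cycle_bound[OF cy k1 sk] .
    have cardD: "card D = m" using cD inj by (metis card_atLeastLessThan card_image diff_zero)
    have cardX: "card X = k" using bij_betw_same_card[OF bf] by simp
    have "card X \<le> card D" using XD gc.finD by (simp add: card_mono)
    then have km: "k = m" using mk cardD cardX by simp
    have XeqD: "X = D" using XD gc.finD cardD cardX km by (simp add: card_subset_eq)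
    have "f 0 \<in> D" using fX[of 0] k1 XD by auto
    then obtain p where p: "p < m" "f 0 = c p" using cD by auto
    from cyc_edges[OF cy p(1)]
    have e1: "E (c p) (c ((p + 1) mod m))" and e2: "E (c p) (c ((p + m - 1) mod m))"
      and ne: "c ((p + 1) mod m) \<noteq> c ((p + m - 1) mod m)" by auto
    have "c ((p + 1) mod m) \<in> X" "c ((p + m - 1) mod m) \<in> X" using XeqD cD m3 by auto
    then obtain a b where ab: "a < k" "f a = c ((p + 1) mod m)" "b < k" "f b = c ((p + m - 1) mod m)"
      using bf by (auto simp: bij_betw_def)
    have ea: "E (f 0) (f a)" and eb: "E (f 0) (f b)" using e1 e2 ab p by auto
    have "0 < k" using k1 by simp
    have "a = 1" using Ef[rule_format, OF \<open>0 < k\<close> ab(1)] ea by simp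
    moreover have "b = 1" using Ef[rule_format, OF \<open>0 < k\<close> ab(3)] eb by simp
    ultimately show ?thesis using ab ne by simp
  qed
qed

end


theorem lemma4p5:
  fixes V :: "'a set" and E :: "'a \<Rightarrow> 'a \<Rightarrow> bool" and k :: nat
  assumes "simple_graph V E"
    and "max_degree V E = 2"
    and "k \<ge> 1"
    and "\<exists>!C. path_component V E C \<and> card C \<ge> k - 1"
    and "s_path V E k \<le> k"
  shows "(\<forall>m. has_cycle_of_length V E m \<longrightarrow> m \<le> k) \<and>
         (\<forall>C. path_component V E C \<and> card C \<ge> k - 1 \<longrightarrow> card C = s_path V E k + k - 1)"
proof -
  have finV: "finite V" using assms(1) by (simp add: simple_graph_def)
  have deg: "card {u \<in> V. E v u} \<le> 2" if "v \<in> V" for v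
  proof -
    have "degree V E v \<le> Max (degree V E ` V)" using finV that by simp
    then show ?thesis using assms(2) by (simp add: max_degree_def degree_def)
  qed
  interpret g: g2 V E using assms(1) deg by unfold_locales auto
  have part1: "\<forall>m. has_cycle_of_length V E m \<longrightarrow> m \<le> k"
    using g.has_cycle_iff g.cycle_bound assms(3,5) by blast
  have part2: "card C = s_path V E k + k - 1" if pc: "path_component V E C" and cC: "card C \<ge> k - 1" for C
  proof -
    have uniq: "D = C" if "path_component V E D" "card D \<ge> k - 1" for D
      using assms(4) pc cC that by blast
    define L where "L = card C"
    obtain g where bg: "bij_betw g {0..<L} C"
      and Eg: "\<forall>i<L. \<forall>j<L. E (g i) (g j) \<longleftrightarrow> (i + 1 = j \<or> j + 1 = i)"
      using pc unfolding path_component_def induces_path_def L_def by blast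
    have CV: "C \<subseteq> V" using pc unfolding path_component_def component_def by auto
    have injg: "inj_on g {0..<L}" and gC: "g ` {0..<L} = C" using bg by (auto simp: bij_betw_def)
    define W where "W = (\<lambda>i. g ` {i..<i + k})"
    have S: "{X. X \<subseteq> V \<and> induces_path E X k} = W ` {i. i + k \<le> L}"
    proof
      show "{X. X \<subseteq> V \<and> induces_path E X k} \<subseteq> W ` {i. i + k \<le> L}"
      proof
        fix X assume "X \<in> {X. X \<subseteq> V \<and> induces_path E X k}"
        then have XV: "X \<subseteq> V" and ip: "induces_path E X k" by auto
        obtain D where pD: "path_component V E D" and XD: "X \<subseteq> D"
          using g.in_path_comp[OF XV ip assms(3,5)] by blast
        obtain f where bf: "bij_betw f {0..<k} X"
          and Ef: "\<forall>i<k. \<forall>j<k. E (f i) (f j) \<longleftrightarrow> (i + 1 = j \<or> j + 1 = i)"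
          using ip unfolding induces_path_def by blast
        have "finite D" using pD g.finV unfolding path_component_def component_def
          by (auto intro: finite_subset)
        then have "card X \<le> card D" using XD by (simp add: card_mono)
        moreover have "card X = k" using bij_betw_same_card[OF bf] by simp
        ultimately have "D = C" using uniq pD by simp
        then have XC: "X \<subseteq> C" using XD by simp
        obtain i where "i + k \<le> L" "X = g ` {i..<i+k}"
        proof -
          have Eg': "\<And>i j. i < L \<Longrightarrow> j < L \<Longrightarrow> E (g i) (g j) \<longleftrightarrow> (i + 1 = j \<or> j + 1 = i)"
            using Eg by blast
          have Ef': "\<And>i j. i < k \<Longrightarrow> j < k \<Longrightarrow> E (f i) (f j) \<longleftrightarrow> (i + 1 = j \<or> j + 1 = i)"
            using Ef by blast
          show ?thesis using window_of[OF bg Eg' bf Ef' XC assms(3)] that by blast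
        qed
        then show "X \<in> W ` {i. i + k \<le> L}" unfolding W_def by blast
      qed
      show "W ` {i. i + k \<le> L} \<subseteq> {X. X \<subseteq> V \<and> induces_path E X k}"
      proof
        fix X assume "X \<in> W ` {i. i + k \<le> L}"
        then obtain i where i: "i + k \<le> L" "X = g ` {i..<i + k}" unfolding W_def by blast
        have "X \<subseteq> C" using i gC by auto
        then have "X \<subseteq> V" using CV by auto
        moreover have "induces_path E X k" unfolding induces_path_def
        proof (intro exI conjI allI impI)
          show "bij_betw (\<lambda>j. g (i + j)) {0..<k} X"
            unfolding bij_betw_def
          proof
            show "inj_on (\<lambda>j. g (i + j)) {0..<k}"
            proof (rule inj_onI)
              fix x y assume xy: "x \<in> {0..<k}" "y \<in> {0..<k}" "g (i + x) = g (i + y)"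
              have "i + x \<in> {0..<L}" "i + y \<in> {0..<L}" using xy i(1) by auto
              then have "i + x = i + y" using injg xy(3) by (simp add: inj_on_eq_iff)
              then show "x = y" by simp
            qed
            have "(\<lambda>j. g (i + j)) ` {0..<k} = g ` ((\<lambda>j. i + j) ` {0..<k})" by (simp only: image_image)
            also have "(\<lambda>j. i + j) ` {0..<k} = {i..<i + k}" by (simp add: add.commute)
            finally show "(\<lambda>j. g (i + j)) ` {0..<k} = X" using i(2) by simp
          qed
          fix a b assume ab: "a < k" "b < k"
          then show "E (g (i + a)) (g (i + b)) \<longleftrightarrow> (a + 1 = b \<or> b + 1 = a)"
            using Eg i(1) by auto
        qed
        ultimately show "X \<in> {X. X \<subseteq> V \<and> induces_path E X k}" by simp
      qed
    qed
    have injW: "inj_on W {i. i + k \<le> L}"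
    proof (rule inj_onI)
      fix i i' assume ii: "i \<in> {i. i + k \<le> L}" "i' \<in> {i. i + k \<le> L}" "W i = W i'"
      have "{i..<i + k} = {i'..<i' + k}"
        using ii injg unfolding W_def by (simp add: inj_on_image_eq_iff)
      moreover have "i \<in> {i..<i + k}" "i' \<in> {i'..<i' + k}" using assms(3) by auto
      ultimately have "i \<in> {i'..<i' + k}" "i' \<in> {i..<i + k}" by blast+
      then show "i = i'" by auto
    qed
    have "s_path V E k = card {i. i + k \<le> L}"
      unfolding s_path_def S using injW by (simp add: card_image)
    also have "{i. i + k \<le> L} = {..<L + 1 - k}" by auto
    finally have "s_path V E k = L + 1 - k" by simp
    then show ?thesis using cC assms(3) unfolding L_def by simp
  qed
  show ?thesis using part1 part2 by blast
qed

end
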